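(* Let $f:E_A^{\mathbb N}\to\mathbb R$ be summable, strongly regular and Hölder-type with $P(f)=0$. There is a constant $K_1>0$, depending only on $h$, such that for every $n\ge1$, every $\omega\in E_A^n$ and every $\rho\in E_A^{\mathbb N}$ with $\omega\rho$ admissible, $$(1-K_1e^{-n\alpha})h(\omega\rho)m([\omega])\le\mu([\omega])\le(1+K_1e^{-n\alpha})h(\omega\rho)m([\omega]).$$
   Context: $E$ countable, $A:E\times E\to\{0,1\}$, $E_A^{\mathbb N}$ admissible one-sided sequences, $E_A^n$ admissible words of length $n$; the subshift is finitely irreducible. $S_nf=\sum_{j<n}f\circ\sigma^j$, $[\omega]$ cylinders, $|\rho\wedge\rho'|$ common-prefix length. Fix $\alpha>0$; Hölder-type: $V_\alpha(f)=\sup_{n\ge1}\sup\{|f(\rho)-f(\rho')|e^{\alpha(n-1)}:|\rho\wedge\rho'|\ge n\}<\infty$. Summable: $\sum_e\exp(\sup_{[e]}f)<\infty$. $P(g)=\lim_n\frac1n\log\sum_{\omega\in E_A^n}\exp(\sup_{[\omega]}S_ng)$; strongly regular: $P(xf)=0$ for some $x>0$ and $0<P(xf)<\infty$ for some $x>0$. $\mathcal L_1g(\rho)=\sum_{e:A_{e\rho_1}=1}e^{f(e\rho)}g(e\rho)$; $m$ the Borel probability with $\mathcal L_1^*m=m$; $h$ the positive Hölder continuous function with $\mathcal L_1h=h$, $\int h\,dm=1$; $\mu$ the measure $\mu(B)=\int_Bh\,dm$. *)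

theory Defs
  imports "HOL-Probability.Probability"
begin

text \<open>Symbolic dynamics over a countable alphabet (the type 'e), incidence matrix
  A :: 'e => 'e => bool (A a b means A_{ab} = 1).  One-sided sequences are nat => 'e.\<close>

definition admissible :: "('e \<Rightarrow> 'e \<Rightarrow> bool) \<Rightarrow> (nat \<Rightarrow> 'e) \<Rightarrow> bool" where
  "admissible A x \<longleftrightarrow> (\<forall>i. A (x i) (x (Suc i)))"

definition XA :: "('e \<Rightarrow> 'e \<Rightarrow> bool) \<Rightarrow> (nat \<Rightarrow> 'e) set" where
  "XA A = {x. admissible A x}"

definition adm_word :: "('e \<Rightarrow> 'e \<Rightarrow> bool) \<Rightarrow> 'e list \<Rightarrow> bool" where
  "adm_word A w \<longleftrightarrow> (\<forall>i. Suc i < length w \<longrightarrow> A (w ! i) (w ! Suc i))"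

definition words :: "('e \<Rightarrow> 'e \<Rightarrow> bool) \<Rightarrow> nat \<Rightarrow> 'e list set" where
  "words A n = {w. length w = n \<and> adm_word A w}"

definition cyl :: "('e \<Rightarrow> 'e \<Rightarrow> bool) \<Rightarrow> 'e list \<Rightarrow> (nat \<Rightarrow> 'e) set" where
  "cyl A w = {x \<in> XA A. \<forall>i<length w. x i = w ! i}"

definition wcat :: "'e list \<Rightarrow> (nat \<Rightarrow> 'e) \<Rightarrow> (nat \<Rightarrow> 'e)" where
  "wcat w x = (\<lambda>i. if i < length w then w ! i else x (i - length w))"

definition shift :: "(nat \<Rightarrow> 'e) \<Rightarrow> (nat \<Rightarrow> 'e)" where
  "shift x = (\<lambda>i. x (Suc i))"

definition birkhoff :: "nat \<Rightarrow> ((nat \<Rightarrow> 'e) \<Rightarrow> real) \<Rightarrow> (nat \<Rightarrow> 'e) \<Rightarrow> real" where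
  "birkhoff n g x = (\<Sum>j<n. g ((shift ^^ j) x))"

definition expsup :: "('e \<Rightarrow> 'e \<Rightarrow> bool) \<Rightarrow> ((nat \<Rightarrow> 'e) \<Rightarrow> real) \<Rightarrow> 'e list \<Rightarrow> ennreal" where
  "expsup A g w = (SUP x\<in>cyl A w. ennreal (exp (g x)))"

definition Zpart :: "('e \<Rightarrow> 'e \<Rightarrow> bool) \<Rightarrow> ((nat \<Rightarrow> 'e) \<Rightarrow> real) \<Rightarrow> nat \<Rightarrow> ennreal" where
  "Zpart A g n = (\<integral>\<^sup>+ w. expsup A (birkhoff n g) w \<partial>count_space (words A n))"

definition log_enn :: "ennreal \<Rightarrow> ereal" where
  "log_enn z = (if z = \<infinity> then \<infinity> else if z = 0 then -\<infinity> else ereal (ln (enn2real z)))"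

definition pressure :: "('e \<Rightarrow> 'e \<Rightarrow> bool) \<Rightarrow> ((nat \<Rightarrow> 'e) \<Rightarrow> real) \<Rightarrow> ereal" where
  "pressure A g = lim (\<lambda>n. log_enn (Zpart A g n) / ereal (real n))"

definition holder_type :: "('e \<Rightarrow> 'e \<Rightarrow> bool) \<Rightarrow> real \<Rightarrow> ((nat \<Rightarrow> 'e) \<Rightarrow> real) \<Rightarrow> bool" where
  "holder_type A \<alpha> f \<longleftrightarrow> (\<exists>C. \<forall>n\<ge>1. \<forall>x\<in>XA A. \<forall>y\<in>XA A.
      (\<forall>i<n. x i = y i) \<longrightarrow> \<bar>f x - f y\<bar> * exp (\<alpha> * (real n - 1)) \<le> C)"

definition summable_pot :: "('e \<Rightarrow> 'e \<Rightarrow> bool) \<Rightarrow> ((nat \<Rightarrow> 'e) \<Rightarrow> real) \<Rightarrow> bool" where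
  "summable_pot A f \<longleftrightarrow> (\<integral>\<^sup>+ e. expsup A f [e] \<partial>count_space UNIV) < \<infinity>"

definition strongly_regular :: "('e \<Rightarrow> 'e \<Rightarrow> bool) \<Rightarrow> ((nat \<Rightarrow> 'e) \<Rightarrow> real) \<Rightarrow> bool" where
  "strongly_regular A f \<longleftrightarrow>
     (\<exists>t>0. pressure A (\<lambda>x. t * f x) = 0) \<and>
     (\<exists>t>0. 0 < pressure A (\<lambda>x. t * f x) \<and> pressure A (\<lambda>x. t * f x) < \<infinity>)"

definition finitely_irreducible :: "('e \<Rightarrow> 'e \<Rightarrow> bool) \<Rightarrow> bool" where
  "finitely_irreducible A \<longleftrightarrow> (\<exists>\<Lambda>. finite \<Lambda> \<and>
      (\<forall>a b. \<exists>l\<in>\<Lambda>. adm_word A (a # l @ [b])))"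

definition transfer :: "('e \<Rightarrow> 'e \<Rightarrow> bool) \<Rightarrow> ((nat \<Rightarrow> 'e) \<Rightarrow> real) \<Rightarrow> ((nat \<Rightarrow> 'e) \<Rightarrow> real)
     \<Rightarrow> (nat \<Rightarrow> 'e) \<Rightarrow> real" where
  "transfer A f g x = (\<Sum>\<^sub>\<infinity>e\<in>{e. A e (x 0)}. exp (f (wcat [e] x)) * g (wcat [e] x))"

text \<open>Continuity on E_A^N for the product topology (E discrete)\<close>
definition cont_XA :: "('e \<Rightarrow> 'e \<Rightarrow> bool) \<Rightarrow> ((nat \<Rightarrow> 'e) \<Rightarrow> real) \<Rightarrow> bool" where
  "cont_XA A g \<longleftrightarrow> (\<forall>x\<in>XA A. \<forall>\<epsilon>>0. \<exists>n. \<forall>y\<in>XA A. (\<forall>i<n. y i = x i) \<longrightarrow> \<bar>g y - g x\<bar> < \<epsilon>)"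

text \<open>Borel sigma-algebra of E_A^N (generated by cylinders, E countable discrete)\<close>
definition shift_borel :: "('e \<Rightarrow> 'e \<Rightarrow> bool) \<Rightarrow> (nat \<Rightarrow> 'e) measure" where
  "shift_borel A = sigma (XA A) (range (cyl A))"

end

theory Submission
  imports Defs
begin

lemma adm_word_Nil[simp]: "adm_word A []" and adm_word_single[simp]: "adm_word A [a]"
  unfolding adm_word_def by auto

lemma adm_word_Cons: "adm_word A (a # u) \<longleftrightarrow> adm_word A u \<and> (u \<noteq> [] \<longrightarrow> A a (hd u))"
  unfolding adm_word_def
  apply (cases u)
   apply simp
  apply (auto simp: nth_Cons split: nat.splits)
  done

lemma adm_word_append: "adm_word A (u @ v) \<longleftrightarrow> adm_word A u \<and> adm_word A v \<and> (u \<noteq> [] \<and> v \<noteq> [] \<longrightarrow> A (last u) (hd v))"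
  by (induction u) (auto simp: adm_word_Cons)

lemma wcat_Cons: "wcat (e # u) x = wcat [e] (wcat u x)"
  unfolding wcat_def by (auto simp: nth_Cons split: nat.splits)

lemma wcat_Nil[simp]: "wcat [] x = x"
  unfolding wcat_def by simp

lemma wcat_0_Cons[simp]: "wcat (e # u) x 0 = e"
  unfolding wcat_def by simp

lemma shift_wcat_Cons[simp]: "shift (wcat (e # u) x) = wcat u x"
  unfolding wcat_def shift_def by auto

lemma admissible_shift: "admissible A x \<Longrightarrow> admissible A (shift x)"
  unfolding admissible_def shift_def by auto

lemma admissible_wcat_Cons: "admissible A (wcat (e # u) x) \<longleftrightarrow> admissible A (wcat u x) \<and> A e (wcat u x 0)"
proof
  assume a: "admissible A (wcat (e # u) x)"
  have "admissible A (wcat u x)" using admissible_shift[OF a] by simp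
  moreover have "A e (wcat u x 0)" using a unfolding admissible_def
    by (metis wcat_0_Cons shift_wcat_Cons shift_def)
  ultimately show "admissible A (wcat u x) \<and> A e (wcat u x 0)" by simp
next
  assume a: "admissible A (wcat u x) \<and> A e (wcat u x 0)"
  show "admissible A (wcat (e # u) x)" unfolding admissible_def
  proof
    fix i show "A (wcat (e # u) x i) (wcat (e # u) x (Suc i))"
    proof (cases i)
      case 0 then show ?thesis using a by (metis wcat_0_Cons shift_wcat_Cons shift_def)
    next
      case (Suc j)
      have "wcat (e # u) x (Suc k) = wcat u x k" for k
        by (metis shift_wcat_Cons shift_def)
      then show ?thesis using a Suc unfolding admissible_def by simp
    qed
  qed
qed

lemma wcat_0: "u \<noteq> [] \<Longrightarrow> wcat u x 0 = hd u"
  by (cases u) auto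

lemma admissible_wcat: "admissible A (wcat u x) \<longleftrightarrow> adm_word A u \<and> admissible A x \<and> (u \<noteq> [] \<longrightarrow> A (last u) (x 0))"
proof (induction u)
  case Nil then show ?case by (simp add: adm_word_def)
next
  case (Cons a u)
  have "admissible A (wcat (a # u) x) \<longleftrightarrow> (adm_word A u \<and> admissible A x \<and> (u \<noteq> [] \<longrightarrow> A (last u) (x 0))) \<and> A a (wcat u x 0)"
    by (simp only: admissible_wcat_Cons Cons.IH)
  then show ?case
    by (cases u) (auto simp: adm_word_Cons wcat_0)
qed

fun wt :: "((nat \<Rightarrow> 'e) \<Rightarrow> real) \<Rightarrow> 'e list \<Rightarrow> (nat \<Rightarrow> 'e) \<Rightarrow> real" where
  "wt f [] x = 1"
| "wt f (e # u) x = exp (f (wcat (e # u) x)) * wt f u x"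

lemma wt_pos: "wt f u x > 0"
  by (induction u) auto

lemma one_step:
  assumes h_pos: "\<And>x. x \<in> XA A \<Longrightarrow> h x > 0"
    and h_eigen: "\<And>x. x \<in> XA A \<Longrightarrow> transfer A f h x = h x"
    and x: "x \<in> XA A" and e: "A e (x 0)"
  shows "exp (f (wcat [e] x)) * h (wcat [e] x) \<le> h x"
proof -
  let ?g = "\<lambda>e. exp (f (wcat [e] x)) * h (wcat [e] x)"
  let ?S = "{e. A e (x 0)}"
  have hx: "h x = infsum ?g ?S" using h_eigen[OF x] unfolding transfer_def by simp
  have "?g summable_on ?S"
  proof (rule ccontr)
    assume "\<not> ?g summable_on ?S"
    then have "infsum ?g ?S = 0" by (rule infsum_not_exists)
    then show False using hx h_pos[OF x] by simp
  qed
  moreover have "\<And>e'. e' \<in> ?S \<Longrightarrow> ?g e' \<ge> 0"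
  proof -
    fix e' assume "e' \<in> ?S"
    then have "wcat [e'] x \<in> XA A" using x unfolding XA_def by (simp add: admissible_wcat)
    then show "?g e' \<ge> 0" using h_pos by (simp add: less_imp_le)
  qed
  ultimately have "infsum ?g {e} \<le> infsum ?g ?S"
    using e by (intro infsum_mono_neutral) auto
  then show ?thesis using hx by simp
qed

lemma chain:
  assumes h_pos: "\<And>x. x \<in> XA A \<Longrightarrow> h x > 0"
    and h_eigen: "\<And>x. x \<in> XA A \<Longrightarrow> transfer A f h x = h x"
  shows "wcat u x \<in> XA A \<Longrightarrow> wt f u x * h (wcat u x) \<le> h x"
proof (induction u)
  case Nil then show ?case by simp
next
  case (Cons e u)
  have adm: "admissible A (wcat (e # u) x)" using Cons.prems unfolding XA_def by simp
  then have y: "wcat u x \<in> XA A" and ey: "A e (wcat u x 0)"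
    unfolding XA_def by (auto simp: admissible_wcat_Cons)
  have eq: "wcat (e # u) x = wcat [e] (wcat u x)" by (rule wcat_Cons)
  have s: "exp (f (wcat [e] (wcat u x))) * h (wcat [e] (wcat u x)) \<le> h (wcat u x)"
    by (rule one_step[OF h_pos h_eigen y ey])
  have ih: "wt f u x * h (wcat u x) \<le> h x" using Cons.IH y by simp
  have "wt f (e # u) x * h (wcat (e # u) x) = wt f u x * (exp (f (wcat [e] (wcat u x))) * h (wcat [e] (wcat u x)))"
    using eq by simp
  also have "\<dots> \<le> wt f u x * h (wcat u x)"
    using s wt_pos[of f u x] by (intro mult_left_mono) auto
  finally show ?case using ih by linarith
qed

lemma f_lower_letter:
  assumes "holder_type A \<alpha> f"
  shows "\<exists>b. \<forall>v\<in>XA A. v 0 = e \<longrightarrow> b \<le> f v"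
proof (cases "\<exists>p\<in>XA A. p 0 = e")
  case False then show ?thesis by auto
next
  case True
  then obtain p where p: "p \<in> XA A" "p 0 = e" by auto
  obtain C where C: "\<forall>n\<ge>1. \<forall>x\<in>XA A. \<forall>y\<in>XA A.
      (\<forall>i<n. x i = y i) \<longrightarrow> \<bar>f x - f y\<bar> * exp (\<alpha> * (real n - 1)) \<le> C"
    using assms unfolding holder_type_def by blast
  show ?thesis
  proof (intro exI ballI impI)
    fix v assume v: "v \<in> XA A" "v 0 = e"
    have "\<bar>f p - f v\<bar> * exp (\<alpha> * (real 1 - 1)) \<le> C"
      using C p v by auto
    then show "f p - C \<le> f v" by simp
  qed
qed

lemma wt_lower:
  assumes "holder_type A \<alpha> f"
  shows "\<exists>c>0. \<forall>x. wcat u x \<in> XA A \<longrightarrow> c \<le> wt f u x"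
proof (induction u)
  case Nil then show ?case by (intro exI[of _ 1]) simp
next
  case (Cons e u)
  obtain c where c: "c > 0" "\<forall>x. wcat u x \<in> XA A \<longrightarrow> c \<le> wt f u x" using Cons.IH by blast
  obtain b where b: "\<forall>v\<in>XA A. v 0 = e \<longrightarrow> b \<le> f v" using f_lower_letter[OF assms] by blast
  show ?case
  proof (intro exI[of _ "exp b * c"] conjI allI impI)
    show "exp b * c > 0" using c by simp
    fix x assume x: "wcat (e # u) x \<in> XA A"
    then have y: "wcat u x \<in> XA A"
      unfolding XA_def by (auto simp: admissible_wcat_Cons)
    have "b \<le> f (wcat (e # u) x)" using b x by simp
    then have "exp b \<le> exp (f (wcat (e # u) x))" by simp
    moreover have "c \<le> wt f u x" using c y by blast
    ultimately show "exp b * c \<le> wt f (e # u) x"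
      using c by (simp add: mult_mono)
  qed
qed

lemma finite_min_lower:
  assumes "finite S" "\<forall>t\<in>S. \<exists>c>0. \<forall>x. P t x \<longrightarrow> c \<le> (g t x :: real)"
  shows "\<exists>c>0. \<forall>t\<in>S. \<forall>x. P t x \<longrightarrow> c \<le> g t x"
  using assms
proof (induction S rule: finite_induct)
  case empty then show ?case by (intro exI[of _ 1]) simp
next
  case (insert t S)
  obtain c where c: "c > 0" "\<forall>t\<in>S. \<forall>x. P t x \<longrightarrow> c \<le> g t x" using insert by auto
  obtain d where d: "d > 0" "\<forall>x. P t x \<longrightarrow> d \<le> g t x" using insert.prems by auto
  show ?case
    by (rule exI[of _ "min c d"]) (use c d in \<open>auto intro: min.coboundedI1 min.coboundedI2 order.trans\<close>)
qed

lemma h_lower: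
  assumes alpha_pos: "\<alpha> > 0"
    and irred: "finitely_irreducible A"
    and f_holder: "holder_type A \<alpha> f"
    and h_pos: "\<And>x. x \<in> XA A \<Longrightarrow> h x > 0"
    and h_holder: "holder_type A \<alpha> h"
    and h_eigen: "\<And>x. x \<in> XA A \<Longrightarrow> transfer A f h x = h x"
  shows "\<exists>c>0. \<forall>x\<in>XA A. c \<le> h x"
proof (cases "XA A = {}")
  case True then show ?thesis by (intro exI[of _ 1]) simp
next
  case False
  then obtain z where z: "z \<in> XA A" by auto
  define M where "M = h z"
  have M: "M > 0" using h_pos[OF z] M_def by simp
  obtain Ch where Ch: "\<forall>n\<ge>1. \<forall>x\<in>XA A. \<forall>y\<in>XA A.
      (\<forall>i<n. x i = y i) \<longrightarrow> \<bar>h x - h y\<bar> * exp (\<alpha> * (real n - 1)) \<le> Ch"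
    using h_holder unfolding holder_type_def by blast
  obtain k :: nat where k: "2 * Ch / (M * \<alpha>) \<le> real k" using real_arch_simple by blast
  define N where "N = Suc k"
  have N1: "N \<ge> 1" unfolding N_def by simp
  have "Ch \<le> M / 2 * (\<alpha> * real k)"
  proof -
    have "2 * Ch \<le> real k * (M * \<alpha>)" using k M alpha_pos by (simp add: divide_le_eq)
    then show ?thesis by (simp add: algebra_simps)
  qed
  also have "\<alpha> * real k \<le> exp (\<alpha> * (real N - 1))"
  proof -
    have "\<alpha> * real k = \<alpha> * (real N - 1)" unfolding N_def by simp
    also have "\<dots> \<le> 1 + \<alpha> * (real N - 1)" by simp
    also have "\<dots> \<le> exp (\<alpha> * (real N - 1))" by (rule exp_ge_add_one_self)
    finally show ?thesis .
  qed
  then have "M / 2 * (\<alpha> * real k) \<le> M / 2 * exp (\<alpha> * (real N - 1))"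
    using M by (intro mult_left_mono) auto
  finally have ChM: "Ch \<le> M / 2 * exp (\<alpha> * (real N - 1))" .
  have near: "M / 2 \<le> h y" if y: "y \<in> XA A" "\<forall>i<N. y i = z i" for y
  proof -
    have "\<bar>h y - h z\<bar> * exp (\<alpha> * (real N - 1)) \<le> Ch" using Ch N1 y z by blast
    then have "\<bar>h y - h z\<bar> * exp (\<alpha> * (real N - 1)) \<le> M / 2 * exp (\<alpha> * (real N - 1))"
      using ChM by linarith
    then have "\<bar>h y - h z\<bar> \<le> M / 2" by simp
    then show ?thesis using M_def by linarith
  qed
  define w where "w = map z [0..<N]"
  have lenw: "length w = N" unfolding w_def by simp
  have zadm: "admissible A z" using z unfolding XA_def by simp
  have admw: "adm_word A w" using zadm unfolding adm_word_def admissible_def w_def by simp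
  have wne: "w \<noteq> []" using lenw N1 by auto
  have lastw: "last w = z (N - 1)" unfolding w_def using N1
    by (simp add: last_map last_upt)
  obtain \<Lambda> where Lam: "finite \<Lambda>" "\<forall>a b. \<exists>l\<in>\<Lambda>. adm_word A (a # l @ [b])"
    using irred unfolding finitely_irreducible_def by blast
  obtain c0 where c0: "c0 > 0" "\<forall>t\<in>(\<lambda>l. w @ l) ` \<Lambda>. \<forall>x. wcat t x \<in> XA A \<longrightarrow> c0 \<le> wt f t x"
    using finite_min_lower[of "(\<lambda>l. w @ l) ` \<Lambda>" "\<lambda>t x. wcat t x \<in> XA A" "\<lambda>t x. wt f t x"]
      Lam(1) wt_lower[OF f_holder] by blast
  show ?thesis
  proof (intro exI[of _ "c0 * (M / 2)"] conjI ballI)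
    show "c0 * (M / 2) > 0" using c0 M by simp
    fix x assume x: "x \<in> XA A"
    obtain l where l: "l \<in> \<Lambda>" "adm_word A (z (N - 1) # l @ [x 0])" using Lam(2) by blast
    have a1: "adm_word A (l @ [x 0])" "A (z (N - 1)) (hd (l @ [x 0]))"
      using l(2) by (auto simp: adm_word_Cons)
    have "adm_word A (w @ (l @ [x 0]))"
      using a1 admw lastw by (subst adm_word_append) simp
    then have "adm_word A ((w @ l) @ [x 0])" by simp
    then have "adm_word A (w @ l) \<and> adm_word A [x 0] \<and> (w @ l \<noteq> [] \<and> [x 0] \<noteq> [] \<longrightarrow> A (last (w @ l)) (hd [x 0]))"
      by (rule iffD1[OF adm_word_append])
    then have a2: "adm_word A (w @ l)" "A (last (w @ l)) (x 0)"
      using wne by auto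
    have wx: "wcat (w @ l) x \<in> XA A"
      using a2 x unfolding XA_def by (simp add: admissible_wcat)
    have agree: "\<forall>i<N. wcat (w @ l) x i = z i"
      unfolding wcat_def using lenw by (auto simp: nth_append w_def)
    have "c0 \<le> wt f (w @ l) x" using c0(2) l(1) wx by blast
    moreover have "M / 2 \<le> h (wcat (w @ l) x)" using near[OF wx agree] .
    ultimately have "c0 * (M / 2) \<le> wt f (w @ l) x * h (wcat (w @ l) x)"
      using c0 M by (intro mult_mono) auto
    also have "\<dots> \<le> h x" using chain[OF h_pos h_eigen wx] .
    finally show "c0 * (M / 2) \<le> h x" .
  qed
qed

theorem mainTheorem14:
  fixes A :: "'e::countable \<Rightarrow> 'e \<Rightarrow> bool"
    and f h :: "(nat \<Rightarrow> 'e) \<Rightarrow> real"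
    and \<alpha> :: real
    and m :: "(nat \<Rightarrow> 'e) measure"
  assumes alpha_pos: "\<alpha> > 0"
    and irred: "finitely_irreducible A"
    and f_summable: "summable_pot A f"
    and f_sreg: "strongly_regular A f"
    and f_holder: "holder_type A \<alpha> f"
    and P_zero: "pressure A f = 0"
    and m_prob: "prob_space m"
    and m_space: "space m = XA A"
    and m_sets: "sets m = sets (shift_borel A)"
    and m_fixed: "\<And>g. cont_XA A g \<Longrightarrow> (\<exists>B. \<forall>x\<in>XA A. \<bar>g x\<bar> \<le> B) \<Longrightarrow>
                    integral\<^sup>L m (transfer A f g) = integral\<^sup>L m g"
    and h_pos: "\<And>x. x \<in> XA A \<Longrightarrow> h x > 0"
    and h_holder: "holder_type A \<alpha> h"
    and h_eigen: "\<And>x. x \<in> XA A \<Longrightarrow> transfer A f h x = h x"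
    and h_norm: "integral\<^sup>L m h = 1"
  shows "\<exists>K1>0. \<forall>n\<ge>1. \<forall>\<omega>\<in>words A n. \<forall>\<rho>\<in>XA A. admissible A (wcat \<omega> \<rho>) \<longrightarrow>
           (1 - K1 * exp (- real n * \<alpha>)) * h (wcat \<omega> \<rho>) * measure m (cyl A \<omega>)
             \<le> (\<integral>x\<in>cyl A \<omega>. h x \<partial>m) \<and>
           (\<integral>x\<in>cyl A \<omega>. h x \<partial>m)
             \<le> (1 + K1 * exp (- real n * \<alpha>)) * h (wcat \<omega> \<rho>) * measure m (cyl A \<omega>)"
proof -
  interpret prob_space m by (rule m_prob)
  obtain c where c: "c > 0" "\<forall>x\<in>XA A. c \<le> h x"
    using h_lower[OF alpha_pos irred f_holder h_pos h_holder h_eigen] by blast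
  obtain Ch where Ch: "\<forall>n\<ge>1. \<forall>x\<in>XA A. \<forall>y\<in>XA A.
      (\<forall>i<n. x i = y i) \<longrightarrow> \<bar>h x - h y\<bar> * exp (\<alpha> * (real n - 1)) \<le> Ch"
    using h_holder unfolding holder_type_def by blast
  define K where "K = \<bar>Ch\<bar> * exp \<alpha> / c + 1"
  have Kpos: "K > 0" unfolding K_def using c by (simp add: add_nonneg_pos)
  have hint: "integrable m h"
  proof (rule ccontr)
    assume "\<not> integrable m h"
    then have "integral\<^sup>L m h = 0" by (rule not_integrable_integral_eq)
    then show False using h_norm by simp
  qed
  have cylsets: "cyl A w \<in> sets m" for w
    unfolding m_sets shift_borel_def
    by (subst sets_measure_of) (auto simp: cyl_def)
  show ?thesis
  proof (intro exI[of _ K] conjI allI impI ballI)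
    show "K > 0" by (rule Kpos)
    fix n :: nat and \<omega> \<rho>
    assume n: "n \<ge> 1" and w: "\<omega> \<in> words A n" and rho: "\<rho> \<in> XA A"
      and adm: "admissible A (wcat \<omega> \<rho>)"
    define p where "p = wcat \<omega> \<rho>"
    have p: "p \<in> XA A" using adm unfolding p_def XA_def by simp
    have lw: "length \<omega> = n" using w unfolding words_def by simp
    define E where "E = exp (- real n * \<alpha>)"
    have Epos: "E > 0" unfolding E_def by simp
    have hp: "c \<le> h p" using c p by blast
    have bound: "\<bar>h x - h p\<bar> \<le> K * E * h p" if x: "x \<in> cyl A \<omega>" for x
    proof -
      have xX: "x \<in> XA A" and xi: "\<forall>i<n. x i = \<omega> ! i" using x lw unfolding cyl_def by auto
      have "\<forall>i<n. x i = p i" using xi lw unfolding p_def wcat_def by simp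
      then have "\<bar>h x - h p\<bar> * exp (\<alpha> * (real n - 1)) \<le> Ch" using Ch n xX p by blast
      moreover have "exp (\<alpha> * (real n - 1)) = exp (- \<alpha>) / E"
        unfolding E_def by (simp add: exp_diff[symmetric] exp_minus_inverse algebra_simps exp_minus field_simps)
      ultimately have "\<bar>h x - h p\<bar> * exp (- \<alpha>) \<le> Ch * E"
      proof -
        assume a1: "\<bar>h x - h p\<bar> * exp (\<alpha> * (real n - 1)) \<le> Ch"
          and a2: "exp (\<alpha> * (real n - 1)) = exp (- \<alpha>) / E"
        have "\<bar>h x - h p\<bar> * exp (- \<alpha>) = (\<bar>h x - h p\<bar> * exp (\<alpha> * (real n - 1))) * E"
          using a2 Epos by simp
        also have "\<dots> \<le> Ch * E" using a1 Epos by (intro mult_right_mono) auto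
        finally show ?thesis .
      qed
      then have "\<bar>h x - h p\<bar> \<le> Ch * E * exp \<alpha>"
        by (simp add: exp_minus field_simps)
      also have "\<dots> \<le> \<bar>Ch\<bar> * exp \<alpha> * E" by (simp add: Epos less_imp_le mult.commute mult.left_commute)
      also have "\<bar>Ch\<bar> * exp \<alpha> \<le> K * h p"
      proof -
        have "\<bar>Ch\<bar> * exp \<alpha> = (\<bar>Ch\<bar> * exp \<alpha> / c) * c" using c by simp
        also have "\<dots> \<le> (\<bar>Ch\<bar> * exp \<alpha> / c) * h p" using hp c by (intro mult_left_mono) auto
        also have "\<dots> \<le> K * h p" unfolding K_def using hp c by (simp add: distrib_right)
        finally show ?thesis .
      qed
      then have "\<bar>Ch\<bar> * exp \<alpha> * E \<le> K * h p * E" using Epos by (intro mult_right_mono) auto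
      finally show ?thesis by (simp add: mult_ac)
    qed
    have si_h: "set_integrable m (cyl A \<omega>) h"
      unfolding set_integrable_def by (rule integrable_mult_indicator[OF cylsets hint])
    have si_c: "set_integrable m (cyl A \<omega>) (\<lambda>_. a)" for a :: real
      unfolding set_integrable_def by (rule integrable_mult_indicator[OF cylsets]) simp
    have ci: "(LINT x:cyl A \<omega>|m. a) = a * measure m (cyl A \<omega>)" for a :: real
      by (subst set_integral_const[OF cylsets]) (auto simp: emeasure_finite)
    have "(1 - K * E) * h p * measure m (cyl A \<omega>) = (LINT x:cyl A \<omega>|m. (1 - K * E) * h p)"
      using ci by simp
    also have "\<dots> \<le> (LINT x:cyl A \<omega>|m. h x)"
      using bound by (intro set_integral_mono[OF si_c si_h]) (auto simp: algebra_simps abs_le_iff)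
    finally show "(1 - K * exp (- real n * \<alpha>)) * h (wcat \<omega> \<rho>) * measure m (cyl A \<omega>)
             \<le> (\<integral>x\<in>cyl A \<omega>. h x \<partial>m)" unfolding E_def p_def .
    have "(LINT x:cyl A \<omega>|m. h x) \<le> (LINT x:cyl A \<omega>|m. (1 + K * E) * h p)"
      using bound by (intro set_integral_mono[OF si_h si_c]) (auto simp: algebra_simps abs_le_iff)
    also have "\<dots> = (1 + K * E) * h p * measure m (cyl A \<omega>)"
      using ci by simp
    finally show "(\<integral>x\<in>cyl A \<omega>. h x \<partial>m)
             \<le> (1 + K * exp (- real n * \<alpha>)) * h (wcat \<omega> \<rho>) * measure m (cyl A \<omega>)"
      unfolding E_def p_def .
  qed
qed

end
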